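(* Let $R$ be a semi-graded ring, let $f:N\to M$ be a homogeneous homomorphism of semi-graded $R$-modules, and let $X\subseteq N$. Then $f(\langle X\rangle^{\mathsf{SG}})=\langle f(X)\rangle^{\mathsf{SG}}$.
   Context: Rings are associative with $1$; modules are left modules. A ring $R$ is semi-graded (SG) if there are additive subgroups $R_n$ ($n\in\mathbb{Z}$) with $R=\bigoplus_n R_n$, $R_mR_n\subseteq\bigoplus_{k\le m+n}R_k$, and $1\in R_0$. An $R$-module $M$ is SG if $M=\bigoplus_nM_n$ (additive subgroups) with $R_mM_n\subseteq\bigoplus_{k\le m+n}M_k$ for $m\ge0$, $n\in\mathbb{Z}$. A homomorphism $f:N\to M$ of SG modules is homogeneous if $f(N_n)\subseteq M_n$ for all $n$. A submodule $N'$ of an SG module $N$ is an SG submodule if $N'=\bigoplus_n(N'\cap N_n)$. For a subset $X$ of an SG module, $\langle X\rangle^{\mathsf{SG}}$ is the intersection of all SG submodules containing $X$. *)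

theory Defs
  imports "HOL-Algebra.Algebra"
begin

text \<open>Left modules over a (not necessarily commutative) ring with 1.
  HOL-Algebra's locale module requires a commutative ring, so we use the
  same axioms over an arbitrary ring.\<close>

locale lmodule = R?: ring R + M?: abelian_group M
  for R :: "('a, 'c) ring_scheme" (structure) and M :: "('a, 'b, 'd) module_scheme" (structure) +
  assumes smult_closed [simp, intro]:
      "\<lbrakk>a \<in> carrier R; x \<in> carrier M\<rbrakk> \<Longrightarrow> a \<odot>\<^bsub>M\<^esub> x \<in> carrier M"
    and smult_l_distr:
      "\<lbrakk>a \<in> carrier R; b \<in> carrier R; x \<in> carrier M\<rbrakk> \<Longrightarrow>
      (a \<oplus> b) \<odot>\<^bsub>M\<^esub> x = a \<odot>\<^bsub>M\<^esub> x \<oplus>\<^bsub>M\<^esub> b \<odot>\<^bsub>M\<^esub> x"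
    and smult_r_distr:
      "\<lbrakk>a \<in> carrier R; x \<in> carrier M; y \<in> carrier M\<rbrakk> \<Longrightarrow>
      a \<odot>\<^bsub>M\<^esub> (x \<oplus>\<^bsub>M\<^esub> y) = a \<odot>\<^bsub>M\<^esub> x \<oplus>\<^bsub>M\<^esub> a \<odot>\<^bsub>M\<^esub> y"
    and smult_assoc1:
      "\<lbrakk>a \<in> carrier R; b \<in> carrier R; x \<in> carrier M\<rbrakk> \<Longrightarrow>
      (a \<otimes> b) \<odot>\<^bsub>M\<^esub> x = a \<odot>\<^bsub>M\<^esub> (b \<odot>\<^bsub>M\<^esub> x)"
    and smult_one [simp]:
      "x \<in> carrier M \<Longrightarrow> \<one> \<odot>\<^bsub>M\<^esub> x = x"

definition lmodule_hom ::
  "('a, 'c) ring_scheme \<Rightarrow> ('a, 'b, 'd) module_scheme \<Rightarrow> ('a, 'e, 'f) module_scheme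
     \<Rightarrow> ('b \<Rightarrow> 'e) set" where
  "lmodule_hom R N M = {f. f \<in> carrier N \<rightarrow> carrier M \<and>
     (\<forall>x\<in>carrier N. \<forall>y\<in>carrier N. f (x \<oplus>\<^bsub>N\<^esub> y) = f x \<oplus>\<^bsub>M\<^esub> f y) \<and>
     (\<forall>a\<in>carrier R. \<forall>x\<in>carrier N. f (a \<odot>\<^bsub>N\<^esub> x) = a \<odot>\<^bsub>M\<^esub> f x)}"

definition is_dsum :: "('b, 'm) ring_scheme \<Rightarrow> (int \<Rightarrow> 'b set) \<Rightarrow> bool" where
  "is_dsum G D \<longleftrightarrow>
     (\<forall>n. subgroup (D n) (add_monoid G)) \<and>
     (\<forall>x\<in>carrier G. \<exists>S c. finite S \<and> (\<forall>n\<in>S. c n \<in> D n) \<and> x = finsum G c S) \<and>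
     (\<forall>S c. finite S \<and> (\<forall>n\<in>S. c n \<in> D n) \<and> finsum G c S = \<zero>\<^bsub>G\<^esub>
        \<longrightarrow> (\<forall>n\<in>S. c n = \<zero>\<^bsub>G\<^esub>))"

definition dsum_upto :: "('b, 'm) ring_scheme \<Rightarrow> (int \<Rightarrow> 'b set) \<Rightarrow> int \<Rightarrow> 'b set" where
  "dsum_upto G D n = {finsum G c S | S c. finite S \<and> S \<subseteq> {..n} \<and> (\<forall>k\<in>S. c k \<in> D k)}"

definition semi_graded_ring :: "('a, 'c) ring_scheme \<Rightarrow> (int \<Rightarrow> 'a set) \<Rightarrow> bool" where
  "semi_graded_ring R DR \<longleftrightarrow> ring R \<and> is_dsum R DR \<and>
     (\<forall>m n. \<forall>a\<in>DR m. \<forall>b\<in>DR n. a \<otimes>\<^bsub>R\<^esub> b \<in> dsum_upto R DR (m + n)) \<and>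
     \<one>\<^bsub>R\<^esub> \<in> DR 0"

definition semi_graded_module ::
  "('a, 'c) ring_scheme \<Rightarrow> (int \<Rightarrow> 'a set) \<Rightarrow> ('a, 'b, 'd) module_scheme \<Rightarrow> (int \<Rightarrow> 'b set) \<Rightarrow> bool" where
  "semi_graded_module R DR M DM \<longleftrightarrow> lmodule R M \<and> is_dsum M DM \<and>
     (\<forall>m n. m \<ge> 0 \<longrightarrow> (\<forall>r\<in>DR m. \<forall>x\<in>DM n. r \<odot>\<^bsub>M\<^esub> x \<in> dsum_upto M DM (m + n)))"

definition homogeneous :: "(int \<Rightarrow> 'b set) \<Rightarrow> (int \<Rightarrow> 'e set) \<Rightarrow> ('b \<Rightarrow> 'e) \<Rightarrow> bool" where
  "homogeneous DN DM f \<longleftrightarrow> (\<forall>n. f ` DN n \<subseteq> DM n)"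

definition sg_submodule ::
  "('a, 'c) ring_scheme \<Rightarrow> ('a, 'b, 'd) module_scheme \<Rightarrow> (int \<Rightarrow> 'b set) \<Rightarrow> 'b set \<Rightarrow> bool" where
  "sg_submodule R N DN N' \<longleftrightarrow> submodule N' R N \<and>
     (\<forall>x\<in>N'. \<exists>S c. finite S \<and> (\<forall>n\<in>S. c n \<in> N' \<inter> DN n) \<and> x = finsum N c S)"

definition sg_span ::
  "('a, 'c) ring_scheme \<Rightarrow> ('a, 'b, 'd) module_scheme \<Rightarrow> (int \<Rightarrow> 'b set) \<Rightarrow> 'b set \<Rightarrow> 'b set" where
  "sg_span R N DN A = \<Inter> {N'. sg_submodule R N DN N' \<and> A \<subseteq> N'}"

end

theory Submission
  imports Defs
begin

lemma subgroup_addE: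
  assumes "subgroup H (add_monoid G)"
  shows "H \<subseteq> carrier G" "\<zero>\<^bsub>G\<^esub> \<in> H"
    "\<And>x y. x \<in> H \<Longrightarrow> y \<in> H \<Longrightarrow> x \<oplus>\<^bsub>G\<^esub> y \<in> H"
    "\<And>x. x \<in> H \<Longrightarrow> \<ominus>\<^bsub>G\<^esub> x \<in> H"
  using subgroup.subset[OF assms] subgroup.one_closed[OF assms]
    subgroup.m_closed[OF assms] subgroup.m_inv_closed[OF assms]
  by (auto simp: a_inv_def)

lemma subgroup_addI:
  assumes "H \<subseteq> carrier G" "\<zero>\<^bsub>G\<^esub> \<in> H"
    "\<And>x y. x \<in> H \<Longrightarrow> y \<in> H \<Longrightarrow> x \<oplus>\<^bsub>G\<^esub> y \<in> H"
    "\<And>x. x \<in> H \<Longrightarrow> \<ominus>\<^bsub>G\<^esub> x \<in> H"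
  shows "subgroup H (add_monoid G)"
  using assms by (intro subgroup.intro) (auto simp: a_inv_def)

lemma (in abelian_group) dsum_unique:
  assumes sub: "\<And>n. subgroup (D n) (add_monoid G)"
    and uniq: "\<forall>S c. finite S \<and> (\<forall>n\<in>S. c n \<in> D n) \<and> finsum G c S = \<zero>
        \<longrightarrow> (\<forall>n\<in>S. c n = \<zero>)"
    and fin: "finite S" "finite T"
    and c: "\<forall>n\<in>S. c n \<in> D n" and d: "\<forall>n\<in>T. d n \<in> D n"
    and eq: "finsum G c S = finsum G d T"
    and n: "n \<in> S"
  shows "c n = (if n \<in> T then d n else \<zero>)"
proof -
  note sE = subgroup_addE[OF sub]
  define U where "U = S \<union> T"
  define c' where "c' = (\<lambda>n. if n \<in> S then c n else \<zero>)"
  define d' where "d' = (\<lambda>n. if n \<in> T then d n else \<zero>)"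
  have U: "finite U" using fin U_def by auto
  have c'D: "\<forall>n\<in>U. c' n \<in> D n" using c sE(2) unfolding c'_def by auto
  have d'D: "\<forall>n\<in>U. d' n \<in> D n" using d sE(2) unfolding d'_def by auto
  have c'C: "c' \<in> U \<rightarrow> carrier G" using c'D sE(1) by blast
  have d'C: "d' \<in> U \<rightarrow> carrier G" using d'D sE(1) by blast
  have nd'C: "(\<lambda>n. \<ominus> d' n) \<in> U \<rightarrow> carrier G" using d'C by auto
  have e1: "finsum G c S = finsum G c' U"
    using U c'C c sE(1) unfolding U_def c'_def
    by (intro add.finprod_mono_neutral_cong_left[unfolded finsum_def[symmetric]]) auto
  have e2: "finsum G d T = finsum G d' U"
    using U d'C d sE(1) unfolding U_def d'_def
    by (intro add.finprod_mono_neutral_cong_left[unfolded finsum_def[symmetric]]) auto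
  have neg: "finsum G (\<lambda>n. \<ominus> d' n) U = \<ominus> finsum G d' U"
  proof -
    have "finsum G (\<lambda>n. \<ominus> d' n) U \<oplus> finsum G d' U = finsum G (\<lambda>n. \<ominus> d' n \<oplus> d' n) U"
      using nd'C d'C by (simp add: finsum_addf)
    also have "\<dots> = finsum G (\<lambda>n. \<zero>) U"
      using d'C by (intro finsum_cong') (auto simp: Pi_iff l_neg)
    also have "\<dots> = \<zero>" by simp
    finally show ?thesis using nd'C d'C
      by (metis finsum_closed minus_equality)
  qed
  have "finsum G (\<lambda>n. c' n \<oplus> \<ominus> d' n) U = finsum G c' U \<oplus> \<ominus> finsum G d' U"
    using c'C nd'C neg by (simp add: finsum_addf)
  also have "\<dots> = \<zero>"
  proof -
    have "finsum G c' U = finsum G d' U" unfolding e1[symmetric] e2[symmetric] by (rule eq)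
    thus ?thesis using d'C by (simp add: r_neg)
  qed
  finally have z: "finsum G (\<lambda>n. c' n \<oplus> \<ominus> d' n) U = \<zero>" .
  have "\<forall>n\<in>U. c' n \<oplus> \<ominus> d' n \<in> D n" using c'D d'D sE(3,4) by auto
  hence "\<forall>n\<in>U. c' n \<oplus> \<ominus> d' n = \<zero>"
    using uniq[rule_format, of U "\<lambda>n. c' n \<oplus> \<ominus> d' n"] z U by blast
  hence z2: "c' n \<oplus> \<ominus> d' n = \<zero>" using n U_def by blast
  have cn: "c' n \<in> carrier G" and dn: "d' n \<in> carrier G" using n U_def c'C d'C by auto
  have "\<ominus> (\<ominus> d' n) = c' n" using z2 cn dn by (intro minus_equality) auto
  hence "c' n = d' n" using dn by (simp add: minus_minus)
  thus ?thesis using n unfolding c'_def d'_def by simp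
qed


lemma hom_basic:
  assumes NG: "abelian_group N" and MG: "abelian_group M" and f: "f \<in> lmodule_hom R N M"
  shows "f \<in> carrier N \<rightarrow> carrier M"
    "\<And>x y. x \<in> carrier N \<Longrightarrow> y \<in> carrier N \<Longrightarrow> f (x \<oplus>\<^bsub>N\<^esub> y) = f x \<oplus>\<^bsub>M\<^esub> f y"
    "\<And>a x. a \<in> carrier R \<Longrightarrow> x \<in> carrier N \<Longrightarrow> f (a \<odot>\<^bsub>N\<^esub> x) = a \<odot>\<^bsub>M\<^esub> f x"
    "f \<zero>\<^bsub>N\<^esub> = \<zero>\<^bsub>M\<^esub>"
    "\<And>x. x \<in> carrier N \<Longrightarrow> f (\<ominus>\<^bsub>N\<^esub> x) = \<ominus>\<^bsub>M\<^esub> f x"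
proof -
  interpret N: abelian_group N by (rule NG)
  interpret M: abelian_group M by (rule MG)
  show fC: "f \<in> carrier N \<rightarrow> carrier M"
    and add: "\<And>x y. x \<in> carrier N \<Longrightarrow> y \<in> carrier N \<Longrightarrow> f (x \<oplus>\<^bsub>N\<^esub> y) = f x \<oplus>\<^bsub>M\<^esub> f y"
    and "\<And>a x. a \<in> carrier R \<Longrightarrow> x \<in> carrier N \<Longrightarrow> f (a \<odot>\<^bsub>N\<^esub> x) = a \<odot>\<^bsub>M\<^esub> f x"
    using f unfolding lmodule_hom_def by auto
  have f0: "f \<zero>\<^bsub>N\<^esub> \<in> carrier M" using fC by auto
  have "f \<zero>\<^bsub>N\<^esub> \<oplus>\<^bsub>M\<^esub> f \<zero>\<^bsub>N\<^esub> = f \<zero>\<^bsub>N\<^esub>"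
    using add[of "\<zero>\<^bsub>N\<^esub>" "\<zero>\<^bsub>N\<^esub>"] by simp
  thus z: "f \<zero>\<^bsub>N\<^esub> = \<zero>\<^bsub>M\<^esub>" using f0 M.add.l_cancel_one by blast
  fix x assume x: "x \<in> carrier N"
  have fx: "f x \<in> carrier M" "f (\<ominus>\<^bsub>N\<^esub> x) \<in> carrier M" using fC x by auto
  have "f (\<ominus>\<^bsub>N\<^esub> x) \<oplus>\<^bsub>M\<^esub> f x = \<zero>\<^bsub>M\<^esub>"
    using add[of "\<ominus>\<^bsub>N\<^esub> x" x] x z by (simp add: N.l_neg)
  thus "f (\<ominus>\<^bsub>N\<^esub> x) = \<ominus>\<^bsub>M\<^esub> f x" using fx by (intro M.minus_equality[symmetric]) auto
qed

lemma hom_finsum: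
  assumes NG: "abelian_group N" and MG: "abelian_group M" and f: "f \<in> lmodule_hom R N M"
    and S: "finite S"
  shows "c \<in> S \<rightarrow> carrier N \<Longrightarrow> f (finsum N c S) = finsum M (\<lambda>n. f (c n)) S"
  using S
proof (induction S rule: finite_induct)
  case empty
  then show ?case using hom_basic(4)[OF NG MG f] by (simp add: abelian_monoid.finsum_empty[OF abelian_group.axioms(1)[OF NG]]
      abelian_monoid.finsum_empty[OF abelian_group.axioms(1)[OF MG]])
next
  case (insert a S)
  interpret N: abelian_group N by (rule NG)
  interpret M: abelian_group M by (rule MG)
  have fC: "f \<in> carrier N \<rightarrow> carrier M" by (rule hom_basic(1)[OF NG MG f])
  have cS: "c \<in> S \<rightarrow> carrier N" and ca: "c a \<in> carrier N" using insert.prems by auto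
  have fcS: "(\<lambda>n. f (c n)) \<in> S \<rightarrow> carrier M" using cS fC by auto
  have "f (finsum N c (insert a S)) = f (c a \<oplus>\<^bsub>N\<^esub> finsum N c S)"
    using insert.hyps cS ca by (simp add: N.finsum_insert)
  also have "\<dots> = f (c a) \<oplus>\<^bsub>M\<^esub> f (finsum N c S)"
    using hom_basic(2)[OF NG MG f] ca cS by (simp add: N.finsum_closed)
  also have "\<dots> = f (c a) \<oplus>\<^bsub>M\<^esub> finsum M (\<lambda>n. f (c n)) S" using insert.IH cS by simp
  also have "\<dots> = finsum M (\<lambda>n. f (c n)) (insert a S)"
    using insert.hyps fcS ca fC by (subst M.finsum_insert) auto
  finally show ?case .
qed


lemma sgm_facts:
  assumes "semi_graded_module R DR N DN"
  shows "lmodule R N" "abelian_group N" "\<And>n. subgroup (DN n) (add_monoid N)"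
    "\<And>x. x \<in> carrier N \<Longrightarrow> \<exists>S c. finite S \<and> (\<forall>n\<in>S. c n \<in> DN n) \<and> x = finsum N c S"
    "\<forall>S c. finite S \<and> (\<forall>n\<in>S. c n \<in> DN n) \<and> finsum N c S = \<zero>\<^bsub>N\<^esub>
        \<longrightarrow> (\<forall>n\<in>S. c n = \<zero>\<^bsub>N\<^esub>)"
proof -
  have L: "lmodule R N" and D: "is_dsum N DN" using assms unfolding semi_graded_module_def by auto
  show "lmodule R N" by (rule L)
  show "abelian_group N" using L unfolding lmodule_def by auto
  show "\<And>n. subgroup (DN n) (add_monoid N)" using D unfolding is_dsum_def by auto
  show "\<And>x. x \<in> carrier N \<Longrightarrow> \<exists>S c. finite S \<and> (\<forall>n\<in>S. c n \<in> DN n) \<and> x = finsum N c S"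
    using D unfolding is_dsum_def by auto
  show "\<forall>S c. finite S \<and> (\<forall>n\<in>S. c n \<in> DN n) \<and> finsum N c S = \<zero>\<^bsub>N\<^esub>
        \<longrightarrow> (\<forall>n\<in>S. c n = \<zero>\<^bsub>N\<^esub>)"
    using D unfolding is_dsum_def by blast
qed

lemma submoduleE':
  assumes "submodule H R N"
  shows "H \<subseteq> carrier N" "\<zero>\<^bsub>N\<^esub> \<in> H"
    "\<And>x y. x \<in> H \<Longrightarrow> y \<in> H \<Longrightarrow> x \<oplus>\<^bsub>N\<^esub> y \<in> H"
    "\<And>x. x \<in> H \<Longrightarrow> \<ominus>\<^bsub>N\<^esub> x \<in> H"
    "\<And>a x. a \<in> carrier R \<Longrightarrow> x \<in> H \<Longrightarrow> a \<odot>\<^bsub>N\<^esub> x \<in> H"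
  using subgroup_addE[OF submodule.axioms(1)[OF assms]] submodule.smult_closed[OF assms] by auto

lemma submoduleI':
  assumes "H \<subseteq> carrier N" "\<zero>\<^bsub>N\<^esub> \<in> H"
    "\<And>x y. x \<in> H \<Longrightarrow> y \<in> H \<Longrightarrow> x \<oplus>\<^bsub>N\<^esub> y \<in> H"
    "\<And>x. x \<in> H \<Longrightarrow> \<ominus>\<^bsub>N\<^esub> x \<in> H"
    "\<And>a x. a \<in> carrier R \<Longrightarrow> x \<in> H \<Longrightarrow> a \<odot>\<^bsub>N\<^esub> x \<in> H"
  shows "submodule H R N"
  using assms by (intro submodule.intro subgroup_addI submodule_axioms.intro) auto

lemma carrier_sg:
  assumes sgm: "semi_graded_module R DR N DN"
  shows "sg_submodule R N DN (carrier N)"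
proof -
  note F = sgm_facts[OF sgm]
  interpret N: lmodule R N by (rule F(1))
  have "submodule (carrier N) R N"
  proof (rule submoduleI')
    show "carrier N \<subseteq> carrier N" by (rule subset_refl)
    show "\<zero>\<^bsub>N\<^esub> \<in> carrier N" by (rule N.zero_closed)
    show "x \<oplus>\<^bsub>N\<^esub> y \<in> carrier N" if "x \<in> carrier N" "y \<in> carrier N" for x y
      using that by (rule N.add.m_closed)
    show "\<ominus>\<^bsub>N\<^esub> x \<in> carrier N" if "x \<in> carrier N" for x
      using that by (rule N.a_inv_closed)
    show "a \<odot>\<^bsub>N\<^esub> x \<in> carrier N" if "a \<in> carrier R" "x \<in> carrier N" for a x
      using that by (rule N.smult_closed)
  qed
  moreover have "\<forall>x\<in>carrier N. \<exists>S c. finite S \<and> (\<forall>n\<in>S. c n \<in> carrier N \<inter> DN n) \<and> x = finsum N c S"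
  proof
    fix x assume "x \<in> carrier N"
    then obtain S c where S: "finite S" "\<forall>n\<in>S. c n \<in> DN n" "x = finsum N c S" using F(4) by blast
    have "\<forall>n\<in>S. c n \<in> carrier N \<inter> DN n" using S(2) subgroup_addE(1)[OF F(3)] by blast
    with S show "\<exists>S c. finite S \<and> (\<forall>n\<in>S. c n \<in> carrier N \<inter> DN n) \<and> x = finsum N c S" by blast
  qed
  ultimately show ?thesis unfolding sg_submodule_def by blast
qed

lemma span_sg:
  assumes sgm: "semi_graded_module R DR N DN" and Y: "Y \<subseteq> carrier N"
  shows "sg_submodule R N DN (sg_span R N DN Y)" "Y \<subseteq> sg_span R N DN Y"
    "sg_span R N DN Y \<subseteq> carrier N"
proof -
  note F = sgm_facts[OF sgm]
  interpret N: abelian_group N by (rule F(2))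
  define Fam where "Fam = {N'. sg_submodule R N DN N' \<and> Y \<subseteq> N'}"
  have span: "sg_span R N DN Y = \<Inter> Fam" unfolding Fam_def sg_span_def by simp
  have cF: "carrier N \<in> Fam" using carrier_sg[OF sgm] Y unfolding Fam_def by blast
  have subm: "\<And>H. H \<in> Fam \<Longrightarrow> submodule H R N" unfolding Fam_def sg_submodule_def by blast
  note E = submoduleE'[OF subm]
  show sub: "sg_span R N DN Y \<subseteq> carrier N" using cF span by blast
  show "Y \<subseteq> sg_span R N DN Y" using span unfolding Fam_def by blast
  have "submodule (\<Inter> Fam) R N"
  proof (rule submoduleI')
    show "\<Inter> Fam \<subseteq> carrier N" using sub span by simp
    show "\<zero>\<^bsub>N\<^esub> \<in> \<Inter> Fam" using E(2) by blast
    show "x \<oplus>\<^bsub>N\<^esub> y \<in> \<Inter> Fam" if "x \<in> \<Inter> Fam" "y \<in> \<Inter> Fam" for x y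
      using that E(3) by blast
    show "\<ominus>\<^bsub>N\<^esub> x \<in> \<Inter> Fam" if "x \<in> \<Inter> Fam" for x
      using that E(4) by blast
    show "a \<odot>\<^bsub>N\<^esub> x \<in> \<Inter> Fam" if "a \<in> carrier R" "x \<in> \<Inter> Fam" for a x
      using that E(5) by blast
  qed
  moreover have "\<exists>S c. finite S \<and> (\<forall>n\<in>S. c n \<in> \<Inter> Fam \<inter> DN n) \<and> x = finsum N c S"
    if x: "x \<in> \<Inter> Fam" for x
  proof -
    have xC: "x \<in> carrier N" using x cF by blast
    obtain S c where S: "finite S" "\<forall>n\<in>S. c n \<in> DN n" "x = finsum N c S" using F(4)[OF xC] by blast
    have "c n \<in> H" if n: "n \<in> S" and H: "H \<in> Fam" for n H
    proof -
      have "x \<in> H" using x H by blast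
      then obtain T d where T: "finite T" "\<forall>n\<in>T. d n \<in> H \<inter> DN n" "x = finsum N d T"
        using H unfolding Fam_def sg_submodule_def by blast
      have "c n = (if n \<in> T then d n else \<zero>\<^bsub>N\<^esub>)"
        by (rule N.dsum_unique[OF F(3) F(5) S(1) T(1) S(2)]) (use T S n in auto)
      thus ?thesis using T(2) E(2)[OF H] by auto
    qed
    thus ?thesis using S by blast
  qed
  ultimately show "sg_submodule R N DN (sg_span R N DN Y)" unfolding sg_submodule_def span by blast
qed


lemma preimage_sg:
  assumes sgN: "semi_graded_module R DR N DN" and sgM: "semi_graded_module R DR M DM"
    and f: "f \<in> lmodule_hom R N M" and hom: "homogeneous DN DM f"
    and P: "sg_submodule R M DM P"
  shows "sg_submodule R N DN {x \<in> carrier N. f x \<in> P}"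
proof -
  note FN = sgm_facts[OF sgN] and FM = sgm_facts[OF sgM]
  interpret N: abelian_group N by (rule FN(2))
  interpret M: abelian_group M by (rule FM(2))
  note H = hom_basic[OF FN(2) FM(2) f]
  have Psub: "submodule P R M" using P unfolding sg_submodule_def by blast
  note E = submoduleE'[OF Psub]
  have "submodule {x \<in> carrier N. f x \<in> P} R N"
  proof (rule submoduleI')
    show "{x \<in> carrier N. f x \<in> P} \<subseteq> carrier N" by blast
    show "\<zero>\<^bsub>N\<^esub> \<in> {x \<in> carrier N. f x \<in> P}" using H(4) E(2) by simp
    show "x \<oplus>\<^bsub>N\<^esub> y \<in> {x \<in> carrier N. f x \<in> P}"
      if "x \<in> {x \<in> carrier N. f x \<in> P}" "y \<in> {x \<in> carrier N. f x \<in> P}" for x y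
      using that H(2) E(3) by simp
    show "\<ominus>\<^bsub>N\<^esub> x \<in> {x \<in> carrier N. f x \<in> P}" if "x \<in> {x \<in> carrier N. f x \<in> P}" for x
      using that H(5) E(4) by simp
    show "a \<odot>\<^bsub>N\<^esub> x \<in> {x \<in> carrier N. f x \<in> P}" if "a \<in> carrier R" "x \<in> {x \<in> carrier N. f x \<in> P}" for a x
      using that H(3) E(5) lmodule.smult_closed[OF FN(1)] by simp
  qed
  moreover have "\<exists>S c. finite S \<and> (\<forall>n\<in>S. c n \<in> {x \<in> carrier N. f x \<in> P} \<inter> DN n) \<and> x = finsum N c S"
    if x: "x \<in> {x \<in> carrier N. f x \<in> P}" for x
  proof -
    have xC: "x \<in> carrier N" and fx: "f x \<in> P" using x by auto
    obtain S c where S: "finite S" "\<forall>n\<in>S. c n \<in> DN n" "x = finsum N c S" using FN(4)[OF xC] by blast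
    have cC: "c \<in> S \<rightarrow> carrier N" using S(2) subgroup_addE(1)[OF FN(3)] by blast
    have fxs: "f x = finsum M (\<lambda>n. f (c n)) S" using S hom_finsum[OF FN(2) FM(2) f S(1) cC] by simp
    have fcD: "\<forall>n\<in>S. f (c n) \<in> DM n" using S(2) hom unfolding homogeneous_def by blast
    obtain T d where T: "finite T" "\<forall>n\<in>T. d n \<in> P \<inter> DM n" "f x = finsum M d T"
      using fx P unfolding sg_submodule_def by blast
    have "f (c n) \<in> P" if n: "n \<in> S" for n
    proof -
      have "f (c n) = (if n \<in> T then d n else \<zero>\<^bsub>M\<^esub>)"
        by (rule M.dsum_unique[OF FM(3) FM(5) S(1) T(1) fcD, of d])
           (use T fxs n in auto)
      thus ?thesis using T(2) E(2) by auto
    qed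
    hence "\<forall>n\<in>S. c n \<in> {x \<in> carrier N. f x \<in> P} \<inter> DN n" using S(2) cC by blast
    thus ?thesis using S by blast
  qed
  ultimately show ?thesis unfolding sg_submodule_def by blast
qed

lemma image_sg:
  assumes sgN: "semi_graded_module R DR N DN" and sgM: "semi_graded_module R DR M DM"
    and f: "f \<in> lmodule_hom R N M" and hom: "homogeneous DN DM f"
    and P: "sg_submodule R N DN P"
  shows "sg_submodule R M DM (f ` P)"
proof -
  note FN = sgm_facts[OF sgN] and FM = sgm_facts[OF sgM]
  interpret N: abelian_group N by (rule FN(2))
  interpret M: abelian_group M by (rule FM(2))
  note H = hom_basic[OF FN(2) FM(2) f]
  have Psub: "submodule P R N" using P unfolding sg_submodule_def by blast
  note E = submoduleE'[OF Psub]
  have "submodule (f ` P) R M"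
  proof (rule submoduleI')
    show "f ` P \<subseteq> carrier M" using H(1) E(1) by blast
    show "\<zero>\<^bsub>M\<^esub> \<in> f ` P" by (rule rev_image_eqI[where f=f, OF E(2) H(4)[symmetric]])
    show "x \<oplus>\<^bsub>M\<^esub> y \<in> f ` P" if xy: "x \<in> f ` P" "y \<in> f ` P" for x y
    proof -
      obtain a b where "a \<in> P" "b \<in> P" "x = f a" "y = f b" using xy by blast
      note ab = this
      have "a \<in> carrier N" "b \<in> carrier N" using ab E(1) by auto
      hence "f (a \<oplus>\<^bsub>N\<^esub> b) = x \<oplus>\<^bsub>M\<^esub> y" using H(2) ab by simp
      thus ?thesis by (intro rev_image_eqI[where f=f, OF E(3)[OF ab(1,2)]]) (rule sym)
    qed
    show "\<ominus>\<^bsub>M\<^esub> x \<in> f ` P" if xP: "x \<in> f ` P" for x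
    proof -
      obtain a where "a \<in> P" "x = f a" using xP by blast
      note a = this
      have "a \<in> carrier N" using a E(1) by auto
      hence "f (\<ominus>\<^bsub>N\<^esub> a) = \<ominus>\<^bsub>M\<^esub> x" using H(5) a by simp
      thus ?thesis by (intro rev_image_eqI[where f=f, OF E(4)[OF a(1)]]) (rule sym)
    qed
    show "r \<odot>\<^bsub>M\<^esub> x \<in> f ` P" if rx: "r \<in> carrier R" "x \<in> f ` P" for r x
    proof -
      obtain a where "a \<in> P" "x = f a" using rx(2) by blast
      note a = this
      have "a \<in> carrier N" using a E(1) by auto
      hence "f (r \<odot>\<^bsub>N\<^esub> a) = r \<odot>\<^bsub>M\<^esub> x" using H(3) a rx(1) by simp
      thus ?thesis by (intro rev_image_eqI[where f=f, OF E(5)[OF rx(1) a(1)]]) (rule sym)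
    qed
  qed
  moreover have "\<exists>S c. finite S \<and> (\<forall>n\<in>S. c n \<in> f ` P \<inter> DM n) \<and> y = finsum M c S"
    if y: "y \<in> f ` P" for y
  proof -
    obtain x where x: "x \<in> P" "y = f x" using y by blast
    obtain S c where S: "finite S" "\<forall>n\<in>S. c n \<in> P \<inter> DN n" "x = finsum N c S"
      using x(1) P unfolding sg_submodule_def by blast
    have cC: "c \<in> S \<rightarrow> carrier N" using S(2) E(1) by blast
    have "y = finsum M (\<lambda>n. f (c n)) S" using S x hom_finsum[OF FN(2) FM(2) f S(1) cC] by simp
    moreover have "\<forall>n\<in>S. f (c n) \<in> f ` P \<inter> DM n" using S(2) hom unfolding homogeneous_def by blast
    ultimately show ?thesis using S(1)
      by (intro exI[of _ S] exI[of _ "\<lambda>n. f (c n)"]) simp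
  qed
  ultimately show ?thesis unfolding sg_submodule_def by blast
qed

theorem mainTheorem2:
  fixes R :: "('a, 'c) ring_scheme" and DR :: "int \<Rightarrow> 'a set"
    and N :: "('a, 'b, 'd) module_scheme" and DN :: "int \<Rightarrow> 'b set"
    and M :: "('a, 'e, 'g) module_scheme" and DM :: "int \<Rightarrow> 'e set"
    and f :: "'b \<Rightarrow> 'e" and Y :: "'b set"
  assumes "semi_graded_ring R DR"
    and "semi_graded_module R DR N DN"
    and "semi_graded_module R DR M DM"
    and "f \<in> lmodule_hom R N M"
    and "homogeneous DN DM f"
    and "Y \<subseteq> carrier N"
  shows "f ` sg_span R N DN Y = sg_span R M DM (f ` Y)"
proof
  note sp = span_sg[OF assms(2) assms(6)]
  show "f ` sg_span R N DN Y \<subseteq> sg_span R M DM (f ` Y)"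
  proof
    fix y assume "y \<in> f ` sg_span R N DN Y"
    then obtain x where x: "x \<in> sg_span R N DN Y" "y = f x" by blast
    have "f x \<in> P" if P: "sg_submodule R M DM P" "f ` Y \<subseteq> P" for P
    proof -
      have Q: "sg_submodule R N DN {x \<in> carrier N. f x \<in> P}"
        by (rule preimage_sg[OF assms(2,3,4,5) P(1)])
      have "Y \<subseteq> {x \<in> carrier N. f x \<in> P}" using P(2) assms(6) by blast
      with Q x(1) have "x \<in> {x \<in> carrier N. f x \<in> P}" unfolding sg_span_def by blast
      thus ?thesis by blast
    qed
    thus "y \<in> sg_span R M DM (f ` Y)" using x(2) unfolding sg_span_def by blast
  qed
  show "sg_span R M DM (f ` Y) \<subseteq> f ` sg_span R N DN Y"
  proof -
    have "sg_submodule R M DM (f ` sg_span R N DN Y)"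
      by (rule image_sg[OF assms(2,3,4,5) sp(1)])
    moreover have "f ` Y \<subseteq> f ` sg_span R N DN Y" using sp(2) by blast
    ultimately show ?thesis unfolding sg_span_def by blast
  qed
qed

end
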